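(* Let $(\mathbf W^B,\mathbf W^E)=(\{W^{B,n}\},\{W^{E,n}\})$ be a general sequence of wire-tap channels, $W^{B,n}$ from $\mathcal X^n$ to $\mathcal Y^n$ and $W^{E,n}$ from $\mathcal X^n$ to $\mathcal Z^n$. Then $$C_d(\mathbf W^B,\mathbf W^E)\le\sup_{\mathbf p,\mathbf Q}\big\{\underline I(1|\mathbf p,\mathbf W^B\mathbf Q)-\overline I(0|\mathbf p,\mathbf W^E\mathbf Q)\big\},$$ $$C_I(\mathbf W^B,\mathbf W^E)\le\sup_{\mathbf p,\mathbf Q}\big\{\underline I(1|\mathbf p,\mathbf W^B\mathbf Q)-\overline I(0|\mathbf p,\mathbf W^E\mathbf Q)\big\},$$ where the suprema range over all sequences of sets $\tilde{\mathcal X}^n$, all sequences $\mathbf Q=\{Q^n\}$ of channels from $\tilde{\mathcal X}^n$ to $\mathcal X^n$, and all sequences $\mathbf p=\{p^n\}$ of distributions on $\tilde{\mathcal X}^n$.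
   Context: Channels are maps $x\mapsto W_x$ into probability distributions on a finite or countable output set; $W_p(y)=\sum_xp(x)W_x(y)$. For $\mathbf W=\{W^n\}$ and $\mathbf Q=\{Q^n\}$, $\mathbf W\mathbf Q=\{W^nQ^n\}$ with $(W^nQ^n)_{\tilde x}(y):=\sum_{x\in\mathcal X^n}W^n_x(y)Q^n_{\tilde x}(x)$. A wire-tap code $\Phi=(M,\{Q_i\},\{\mathcal D_i\})$ for $(W^B,W^E)$: input distributions $Q_1,\dots,Q_M$, pairwise disjoint decoding sets $\mathcal D_i$ for the main receiver; $|\Phi|=M$, $\epsilon_B(\Phi)=\frac1M\sum_iW^B_{Q_i}(\mathcal D_i^c)$, $I_E(\Phi)=\sum_i\frac1MD(W^E_{Q_i}\|W^E_\Phi)$ with $W^E_\Phi=\frac1M\sum_iW^E_{Q_i}$, $d_E(\Phi)=\frac1{M(M-1)}\sum_{i\ne j}\sum_z|W^E_{Q_i}(z)-W^E_{Q_j}(z)|$. $C_d(\mathbf W^B,\mathbf W^E):=\sup\{\liminf_n\frac1n\log|\Phi_n|\}$ over sequences of wire-tap codes with $\epsilon_B(\Phi_n)\to0$, $d_E(\Phi_n)\to0$; $C_I$ the same with $I_E(\Phi_n)/n\to0$ instead of $d_E(\Phi_n)\to0$. $\overline I(\epsilon|\mathbf p,\mathbf W):=\inf\{a:\limsup_n\mathrm{E}_{p^n}W^n_x\{y:\frac1n\log\frac{W^n_x(y)}{W^n_{p^n}(y)}>a\}\le\epsilon\}$, $\underline I(\epsilon|\mathbf p,\mathbf W):=\inf\{a:\liminf_n\mathrm{E}_{p^n}W^n_x\{y:\frac1n\log\frac{W^n_x(y)}{W^n_{p^n}(y)}>a\}\le\epsilon\}$,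 with "$\le\epsilon$" replaced by "$<1$" when $\epsilon=1$. *)

theory Defs
  imports "HOL-Analysis.Analysis" "HOL-Probability.Probability"
begin

text \<open>Channels are maps into discrete probability distributions (pmfs); a sequence
  of channels is indexed by the block length n.  Logarithms are natural logarithms.\<close>

definition out_dist :: "('x \<Rightarrow> 'y pmf) \<Rightarrow> 'x pmf \<Rightarrow> 'y pmf" where
  "out_dist W q = bind_pmf q W"

definition chan_comp :: "(nat \<Rightarrow> 'x \<Rightarrow> 'y pmf) \<Rightarrow> (nat \<Rightarrow> 'u \<Rightarrow> 'x pmf) \<Rightarrow> nat \<Rightarrow> 'u \<Rightarrow> 'y pmf" where
  "chan_comp W Q = (\<lambda>n u. bind_pmf (Q n u) (W n))"

definition KL_pmf :: "'a pmf \<Rightarrow> 'a pmf \<Rightarrow> real" where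
  "KL_pmf P R = (\<Sum>\<^sub>\<infinity>z. pmf P z * ln (pmf P z / pmf R z))"

definition l1_pmf :: "'a pmf \<Rightarrow> 'a pmf \<Rightarrow> real" where
  "l1_pmf P R = (\<Sum>\<^sub>\<infinity>z. \<bar>pmf P z - pmf R z\<bar>)"

definition wiretap_code :: "'x set \<Rightarrow> nat \<Rightarrow> (nat \<Rightarrow> 'x pmf) \<Rightarrow> (nat \<Rightarrow> 'y set) \<Rightarrow> bool" where
  "wiretap_code X M Qs Ds \<longleftrightarrow> M \<ge> 1 \<and> (\<forall>i<M. set_pmf (Qs i) \<subseteq> X) \<and> disjoint_family_on Ds {..<M}"

definition eps_B :: "('x \<Rightarrow> 'y pmf) \<Rightarrow> nat \<Rightarrow> (nat \<Rightarrow> 'x pmf) \<Rightarrow> (nat \<Rightarrow> 'y set) \<Rightarrow> real" where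
  "eps_B WB M Qs Ds = (1 / real M) * (\<Sum>i<M. measure_pmf.prob (out_dist WB (Qs i)) (- Ds i))"

definition code_out :: "('x \<Rightarrow> 'z pmf) \<Rightarrow> nat \<Rightarrow> (nat \<Rightarrow> 'x pmf) \<Rightarrow> 'z pmf" where
  "code_out WE M Qs = bind_pmf (pmf_of_set {..<M}) (\<lambda>i. out_dist WE (Qs i))"

definition I_E :: "('x \<Rightarrow> 'z pmf) \<Rightarrow> nat \<Rightarrow> (nat \<Rightarrow> 'x pmf) \<Rightarrow> real" where
  "I_E WE M Qs = (\<Sum>i<M. (1 / real M) * KL_pmf (out_dist WE (Qs i)) (code_out WE M Qs))"

definition d_E :: "('x \<Rightarrow> 'z pmf) \<Rightarrow> nat \<Rightarrow> (nat \<Rightarrow> 'x pmf) \<Rightarrow> real" where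
  "d_E WE M Qs = (1 / (real M * (real M - 1))) *
     (\<Sum>i<M. \<Sum>j\<in>{..<M} - {i}. l1_pmf (out_dist WE (Qs i)) (out_dist WE (Qs j)))"

definition C_d :: "(nat \<Rightarrow> 'x set) \<Rightarrow> (nat \<Rightarrow> 'x \<Rightarrow> 'y pmf) \<Rightarrow> (nat \<Rightarrow> 'x \<Rightarrow> 'z pmf) \<Rightarrow> ereal" where
  "C_d Xs WB WE = Sup {liminf (\<lambda>n. ereal (ln (real (M n)) / real n)) | M Qs Ds.
      (\<forall>n. wiretap_code (Xs n) (M n) (Qs n) (Ds n)) \<and>
      (\<lambda>n. eps_B (WB n) (M n) (Qs n) (Ds n)) \<longlonglongrightarrow> 0 \<and>
      (\<lambda>n. d_E (WE n) (M n) (Qs n)) \<longlonglongrightarrow> 0}"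

definition C_I :: "(nat \<Rightarrow> 'x set) \<Rightarrow> (nat \<Rightarrow> 'x \<Rightarrow> 'y pmf) \<Rightarrow> (nat \<Rightarrow> 'x \<Rightarrow> 'z pmf) \<Rightarrow> ereal" where
  "C_I Xs WB WE = Sup {liminf (\<lambda>n. ereal (ln (real (M n)) / real n)) | M Qs Ds.
      (\<forall>n. wiretap_code (Xs n) (M n) (Qs n) (Ds n)) \<and>
      (\<lambda>n. eps_B (WB n) (M n) (Qs n) (Ds n)) \<longlonglongrightarrow> 0 \<and>
      (\<lambda>n. I_E (WE n) (M n) (Qs n) / real n) \<longlonglongrightarrow> 0}"

definition spec_prob :: "(nat \<Rightarrow> 'u pmf) \<Rightarrow> (nat \<Rightarrow> 'u \<Rightarrow> 'y pmf) \<Rightarrow> nat \<Rightarrow> real \<Rightarrow> real" where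
  "spec_prob p W n a = measure_pmf.expectation (p n) (\<lambda>x.
     measure_pmf.prob (W n x) {y. ln (pmf (W n x) y / pmf (out_dist (W n) (p n)) y) / real n > a})"

definition I_sup :: "real \<Rightarrow> (nat \<Rightarrow> 'u pmf) \<Rightarrow> (nat \<Rightarrow> 'u \<Rightarrow> 'y pmf) \<Rightarrow> ereal" where
  "I_sup eps p W = Inf (ereal ` {a. if eps = 1
       then limsup (\<lambda>n. ereal (spec_prob p W n a)) < 1
       else limsup (\<lambda>n. ereal (spec_prob p W n a)) \<le> ereal eps})"

definition I_inf :: "real \<Rightarrow> (nat \<Rightarrow> 'u pmf) \<Rightarrow> (nat \<Rightarrow> 'u \<Rightarrow> 'y pmf) \<Rightarrow> ereal" where
  "I_inf eps p W = Inf (ereal ` {a. if eps = 1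
       then liminf (\<lambda>n. ereal (spec_prob p W n a)) < 1
       else liminf (\<lambda>n. ereal (spec_prob p W n a)) \<le> ereal eps})"

text \<open>The right-hand side: supremum over sequences of auxiliary input sets (realised as
  countable subsets of nat, namely the supports of p^n), distributions p^n and channels Q^n
  into the input alphabets; pairs for which the difference is the undefined
  infinity minus infinity are excluded.\<close>
definition wt_bound :: "(nat \<Rightarrow> 'x set) \<Rightarrow> (nat \<Rightarrow> 'x \<Rightarrow> 'y pmf) \<Rightarrow> (nat \<Rightarrow> 'x \<Rightarrow> 'z pmf) \<Rightarrow> ereal" where
  "wt_bound Xs WB WE = Sup {I_inf 1 p (chan_comp WB Q) - I_sup 0 p (chan_comp WE Q) |
      (p :: nat \<Rightarrow> nat pmf) (Q :: nat \<Rightarrow> nat \<Rightarrow> 'x pmf).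
      (\<forall>n. \<forall>u\<in>set_pmf (p n). set_pmf (Q n u) \<subseteq> Xs n) \<and>
      \<not> (I_inf 1 p (chan_comp WB Q) = \<infinity> \<and> I_sup 0 p (chan_comp WE Q) = \<infinity>)}"

end

theory Submission
  imports Defs
begin

lemma pmf_summable: "pmf P summable_on A"
proof -
  have "(\<lambda>x. norm (pmf P x)) summable_on A"
    using abs_summable_equivalent pmf_abs_summable by blast
  then show ?thesis by simp
qed

lemma prob_infsum: "measure_pmf.prob P A = infsum (pmf P) A"
  by (simp add: measure_pmf_conv_infsetsum infsetsum_infsum pmf_abs_summable)

lemma dom_summable:
  fixes f h :: "'a \<Rightarrow> real"
  assumes "h summable_on A" "\<And>x. x \<in> A \<Longrightarrow> \<bar>f x\<bar> \<le> h x"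
  shows "f summable_on A"
proof -
  have "(\<lambda>x. norm (f x)) summable_on A"
    by (rule summable_on_comparison_test[OF assms(1)]) (use assms(2) in auto)
  then show ?thesis using abs_summable_summable by blast
qed

lemma prob_cmp:
  assumes "\<And>z. z \<in> A \<Longrightarrow> pmf P z \<le> c * pmf R z"
  shows "measure_pmf.prob P A \<le> c * measure_pmf.prob R A"
proof -
  have "infsum (pmf P) A \<le> infsum (\<lambda>z. c * pmf R z) A"
    by (rule infsum_mono) (auto intro: pmf_summable summable_on_cmult_right assms)
  also have "\<dots> = c * infsum (pmf R) A"
    by (rule infsum_cmult_right) (rule pmf_summable)
  finally show ?thesis by (simp add: prob_infsum)
qed

lemma prob_l1:
  "measure_pmf.prob P A - measure_pmf.prob R A \<le> l1_pmf P R"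
proof -
  have s: "(\<lambda>z. pmf P z + pmf R z) summable_on B" for B
    by (intro summable_on_add pmf_summable)
  have sa: "(\<lambda>z. \<bar>pmf P z - pmf R z\<bar>) summable_on B" for B
  proof (rule dom_summable[OF s])
    fix z show "\<bar>\<bar>pmf P z - pmf R z\<bar>\<bar> \<le> pmf P z + pmf R z"
      using pmf_nonneg[of P z] pmf_nonneg[of R z] by (simp add: abs_le_iff)
  qed
  have sd: "(\<lambda>z. pmf P z - pmf R z) summable_on B" for B
  proof (rule dom_summable[OF s])
    fix z show "\<bar>pmf P z - pmf R z\<bar> \<le> pmf P z + pmf R z"
      using pmf_nonneg[of P z] pmf_nonneg[of R z] by (simp add: abs_le_iff)
  qed
  have "measure_pmf.prob P A - measure_pmf.prob R A = infsum (\<lambda>z. pmf P z - pmf R z) A"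
    using infsum_add[of "pmf P" A "\<lambda>z. - pmf R z"] pmf_summable[of P A] pmf_summable[of R A]
    by (simp add: prob_infsum summable_on_uminus infsum_uminus)
  also have "\<dots> \<le> infsum (\<lambda>z. \<bar>pmf P z - pmf R z\<bar>) UNIV"
    by (rule infsum_mono_neutral) (use sa sd in auto)
  finally show ?thesis by (simp add: l1_pmf_def)
qed

lemma prob_bind_uniform:
  assumes "M \<ge> 1"
  shows "measure_pmf.prob (bind_pmf (pmf_of_set {..<M}) f) A
     = (\<Sum>j<M. measure_pmf.prob (f j) A) / real M"
proof -
  have ne: "{..<M} \<noteq> {}" using assms by (auto simp: lessThan_empty_iff)
  have "emeasure (measure_pmf (bind_pmf (pmf_of_set {..<M}) f)) A
     = (\<integral>\<^sup>+x. emeasure (measure_pmf (f x)) A \<partial>measure_pmf (pmf_of_set {..<M}))"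
    by simp
  also have "\<dots> = (\<Sum>j<M. emeasure (measure_pmf (f j)) A) / card {..<M}"
    using ne by (simp add: nn_integral_pmf_of_set)
  also have "\<dots> = ennreal ((\<Sum>j<M. measure_pmf.prob (f j) A) / real M)"
  proof -
    have "(\<Sum>j<M. emeasure (measure_pmf (f j)) A) = ennreal (\<Sum>j<M. measure_pmf.prob (f j) A)"
      by (simp add: measure_pmf.emeasure_eq_measure sum_ennreal)
    moreover have "(of_nat (card {..<M}) :: ennreal) = ennreal (real M)"
      by (simp add: ennreal_of_nat_eq_real_of_nat)
    ultimately show ?thesis using assms
      by (simp add: divide_ennreal sum_nonneg)
  qed
  finally show ?thesis
    by (simp add: measure_pmf.emeasure_eq_measure sum_nonneg)
qed

lemma pt_lower:
  fixes x y :: real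
  assumes "0 \<le> x" "0 \<le> y" "x \<le> c * y"
  shows "x * ln (x / y) \<ge> x - y"
proof (cases "x = 0")
  case True then show ?thesis using assms by simp
next
  case False
  then have xp: "x > 0" using assms by simp
  have yp: "y > 0" using assms xp
    by (metis less_eq_real_def mult_zero_right not_less)
  have "ln (y / x) \<le> y / x - 1" using xp yp by (intro ln_le_minus_one) simp
  then have "ln (x / y) \<ge> 1 - y / x" using xp yp by (simp add: ln_div)
  then have "x * ln (x / y) \<ge> x * (1 - y / x)" using xp by (intro mult_left_mono) auto
  moreover have "x * (1 - y / x) = x - y" using xp by (simp add: field_simps)
  ultimately show ?thesis by linarith
qed

lemma pt_upper:
  fixes x y :: real
  assumes "0 \<le> x" "0 \<le> y" "x \<le> c * y" "c \<ge> 1"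
  shows "x * ln (x / y) \<le> x * ln c"
proof (cases "x = 0")
  case True then show ?thesis using assms by simp
next
  case False
  then have xp: "x > 0" using assms by simp
  have yp: "y > 0" using assms xp
    by (metis less_eq_real_def mult_zero_right not_less)
  have "x / y \<le> c" using assms yp by (simp add: divide_le_eq)
  then have "ln (x / y) \<le> ln c" using xp yp assms(4) by (subst ln_le_cancel_iff) auto
  then show ?thesis using xp by (intro mult_left_mono) auto
qed

lemma KL_summable:
  assumes "\<And>z. pmf P z \<le> c * pmf R z" "c \<ge> 1"
  shows "(\<lambda>z. pmf P z * ln (pmf P z / pmf R z)) summable_on B"
proof (rule dom_summable)
  show "(\<lambda>z. pmf P z * ln c + pmf R z) summable_on B"
    by (intro summable_on_add summable_on_cmult_left pmf_summable)
  fix z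
  have l: "pmf P z * ln (pmf P z / pmf R z) \<ge> pmf P z - pmf R z"
    by (rule pt_lower[OF pmf_nonneg pmf_nonneg assms(1)])
  have u: "pmf P z * ln (pmf P z / pmf R z) \<le> pmf P z * ln c"
    by (rule pt_upper[OF pmf_nonneg pmf_nonneg assms(1,2)])
  have "pmf P z * ln c \<ge> 0" using assms(2) by simp
  then show "\<bar>pmf P z * ln (pmf P z / pmf R z)\<bar> \<le> pmf P z * ln c + pmf R z"
    unfolding abs_le_iff using l u pmf_nonneg[of P z] pmf_nonneg[of R z] by (intro conjI; linarith)
qed

lemma KL_bound:
  assumes "\<And>z. pmf P z \<le> c * pmf R z" "c \<ge> 1" "n \<ge> 1" "a > 0"
  shows "measure_pmf.prob P {z. ln (pmf P z / pmf R z) / real n > a} \<le> (KL_pmf P R + 1) / (real n * a)"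
proof -
  define A where "A = {z. ln (pmf P z / pmf R z) / real n > a}"
  define f where "f = (\<lambda>z. pmf P z * ln (pmf P z / pmf R z))"
  have sf: "f summable_on B" for B unfolding f_def by (rule KL_summable[OF assms(1,2)])
  have np: "real n > 0" using assms by simp
  have "KL_pmf P R = infsum f (A \<union> -A)" by (simp add: KL_pmf_def f_def)
  also have "\<dots> = infsum f A + infsum f (-A)"
    by (rule infsum_Un_disjoint) (auto intro: sf)
  finally have KL: "KL_pmf P R = infsum f A + infsum f (-A)" .
  have "infsum (\<lambda>z. real n * a * pmf P z) A \<le> infsum f A"
  proof (rule infsum_mono)
    show "(\<lambda>z. real n * a * pmf P z) summable_on A"
      by (intro summable_on_cmult_right pmf_summable)
    fix z assume "z \<in> A"
    then have "ln (pmf P z / pmf R z) > real n * a" using np by (simp add: A_def pos_less_divide_eq mult.commute)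
    then have "pmf P z * (real n * a) \<le> pmf P z * ln (pmf P z / pmf R z)"
      by (intro mult_left_mono) auto
    then show "real n * a * pmf P z \<le> f z" by (simp add: f_def mult.commute)
  qed (rule sf)
  moreover have "infsum (\<lambda>z. real n * a * pmf P z) A = real n * a * measure_pmf.prob P A"
    by (simp add: prob_infsum infsum_cmult_right pmf_summable)
  moreover have "infsum (\<lambda>z. - pmf R z) (-A) \<le> infsum f (-A)"
  proof (rule infsum_mono)
    show "(\<lambda>z. - pmf R z) summable_on (-A)"
      by (simp add: summable_on_uminus pmf_summable)
    fix z
    show "- pmf R z \<le> f z"
      using pt_lower[OF pmf_nonneg pmf_nonneg assms(1)] pmf_nonneg[of P z]
      unfolding f_def by (smt (verit))
  qed (rule sf)
  moreover have "infsum (\<lambda>z. - pmf R z) (-A) \<ge> -1"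
    using measure_pmf.prob_le_1[of R "-A"] by (simp add: infsum_uminus prob_infsum)
  ultimately have "real n * a * measure_pmf.prob P A \<le> KL_pmf P R + 1"
    using KL by linarith
  then show ?thesis using np assms(4) unfolding A_def[symmetric]
    by (simp add: pos_le_divide_eq mult.commute)
qed

lemma mix_pmf:
  assumes "M \<ge> 1" "i < M"
  shows "pmf (out_dist W (Qs i)) z \<le> real M * pmf (code_out W M Qs) z"
proof -
  have "pmf (code_out W M Qs) z = (\<Sum>j<M. pmf (out_dist W (Qs j)) z) / real M"
    using prob_bind_uniform[OF assms(1), of "\<lambda>j. out_dist W (Qs j)" "{z}"]
    by (simp add: code_out_def measure_pmf_single)
  moreover have "pmf (out_dist W (Qs i)) z \<le> (\<Sum>j<M. pmf (out_dist W (Qs j)) z)"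
    using assms(2) by (intro member_le_sum) auto
  ultimately show ?thesis using assms(1) by simp
qed

lemma spec_code:
  assumes "M n \<ge> 1"
  shows "spec_prob (\<lambda>n. pmf_of_set {..<M n}) (chan_comp W Qs) n a =
    (\<Sum>i<M n. measure_pmf.prob (out_dist (W n) (Qs n i))
       {z. ln (pmf (out_dist (W n) (Qs n i)) z / pmf (code_out (W n) (M n) (Qs n)) z) / real n > a}) / real (M n)"
proof -
  have ne: "{..<M n} \<noteq> {}" using assms by (auto simp: lessThan_empty_iff)
  have "out_dist (chan_comp W Qs n) (pmf_of_set {..<M n}) = code_out (W n) (M n) (Qs n)"
    by (simp add: out_dist_def chan_comp_def code_out_def)
  then show ?thesis
    unfolding spec_prob_def using ne
    by (simp add: integral_pmf_of_set chan_comp_def out_dist_def)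
qed

lemma bob_n:
  assumes code: "wiretap_code X M Qs Ds" and n: "n \<ge> 1"
  shows "1 - (\<Sum>i<M. measure_pmf.prob (out_dist W (Qs i))
       {y. ln (pmf (out_dist W (Qs i)) y / pmf (code_out W M Qs) y) / real n > a}) / real M
     \<le> eps_B W M Qs Ds + exp (real n * a) / real M"
proof -
  define V where "V i = out_dist W (Qs i)" for i
  define Psi where "Psi = code_out W M Qs"
  define B where "B i = {y. ln (pmf (V i) y / pmf Psi y) / real n > a}" for i
  have M1: "M \<ge> 1" and disj: "disjoint_family_on Ds {..<M}" using code by (auto simp: wiretap_code_def)
  have np: "real n > 0" using n by simp
  have dom: "pmf (V i) z \<le> real M * pmf Psi z" if "i < M" for i z
    unfolding V_def Psi_def by (rule mix_pmf[OF M1 that])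
  have each: "1 - measure_pmf.prob (V i) (B i) \<le> measure_pmf.prob (V i) (- Ds i) + exp (real n * a) * measure_pmf.prob Psi (Ds i)"
    if i: "i < M" for i
  proof -
    have "1 - measure_pmf.prob (V i) (B i) = measure_pmf.prob (V i) (- B i)"
      by (simp add: measure_pmf.prob_compl[symmetric] Compl_eq_Diff_UNIV)
    also have "\<dots> \<le> measure_pmf.prob (V i) (- Ds i \<union> (- B i \<inter> Ds i))"
      by (intro measure_pmf.finite_measure_mono) auto
    also have "\<dots> \<le> measure_pmf.prob (V i) (- Ds i) + measure_pmf.prob (V i) (- B i \<inter> Ds i)"
      by (rule measure_Un_le) auto
    also have "measure_pmf.prob (V i) (- B i \<inter> Ds i) \<le> exp (real n * a) * measure_pmf.prob Psi (- B i \<inter> Ds i)"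
    proof (rule prob_cmp)
      fix z assume z: "z \<in> - B i \<inter> Ds i"
      show "pmf (V i) z \<le> exp (real n * a) * pmf Psi z"
      proof (cases "pmf (V i) z = 0")
        case True then show ?thesis by simp
      next
        case False
        then have xp: "pmf (V i) z > 0" using pmf_nonneg[of "V i" z] by linarith
        have yp: "pmf Psi z > 0" using dom[OF i, of z] xp
          by (metis less_eq_real_def mult_zero_right not_less pmf_nonneg)
        have "ln (pmf (V i) z / pmf Psi z) / real n \<le> a" using z by (auto simp: B_def)
        then have "ln (pmf (V i) z / pmf Psi z) \<le> real n * a" using np by (simp add: divide_le_eq mult.commute)
        then have "pmf (V i) z / pmf Psi z \<le> exp (real n * a)" using xp yp
          by (metis divide_pos_pos exp_le_cancel_iff exp_ln)
        then show ?thesis using yp by (simp add: divide_le_eq)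
      qed
    qed
    also have "measure_pmf.prob Psi (- B i \<inter> Ds i) \<le> measure_pmf.prob Psi (Ds i)"
      by (intro measure_pmf.finite_measure_mono) auto
    finally show ?thesis by (simp add: mult_left_mono)
  qed
  have sumD: "(\<Sum>i<M. measure_pmf.prob Psi (Ds i)) \<le> 1"
  proof -
    have "(\<Sum>i<M. measure_pmf.prob Psi (Ds i)) = measure_pmf.prob Psi (\<Union>i\<in>{..<M}. Ds i)"
      by (rule measure_pmf.finite_measure_finite_Union[symmetric]) (use disj in auto)
    then show ?thesis by simp
  qed
  have "1 - (\<Sum>i<M. measure_pmf.prob (V i) (B i)) / real M = (\<Sum>i<M. 1 - measure_pmf.prob (V i) (B i)) / real M"
    using M1 by (simp add: sum_subtractf field_simps)
  also have "\<dots> \<le> (\<Sum>i<M. measure_pmf.prob (V i) (- Ds i) + exp (real n * a) * measure_pmf.prob Psi (Ds i)) / real M"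
    by (intro divide_right_mono sum_mono each) auto
  also have "\<dots> = (\<Sum>i<M. measure_pmf.prob (V i) (- Ds i)) / real M + exp (real n * a) * (\<Sum>i<M. measure_pmf.prob Psi (Ds i)) / real M"
    by (simp add: sum.distrib sum_distrib_left add_divide_distrib)
  also have "\<dots> \<le> (\<Sum>i<M. measure_pmf.prob (V i) (- Ds i)) / real M + exp (real n * a) / real M"
    using sumD by (intro add_left_mono divide_right_mono) auto
  finally show ?thesis by (simp add: eps_B_def V_def B_def Psi_def)
qed

lemma l1_nonneg: "l1_pmf P R \<ge> 0"
  unfolding l1_pmf_def by (rule infsum_nonneg) auto

lemma eve_d_n:
  assumes M1: "M \<ge> 1" and n: "n \<ge> 1" and a: "a > 0"
  shows "(1 - exp (- a)) * ((\<Sum>i<M. measure_pmf.prob (out_dist W (Qs i))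
       {y. ln (pmf (out_dist W (Qs i)) y / pmf (code_out W M Qs) y) / real n > a}) / real M)
     \<le> d_E W M Qs"
proof -
  define V where "V i = out_dist W (Qs i)" for i
  define Psi where "Psi = code_out W M Qs"
  define A where "A i = {y. ln (pmf (V i) y / pmf Psi y) / real n > a}" for i
  define S where "S = (\<Sum>i<M. \<Sum>j\<in>{..<M} - {i}. l1_pmf (V i) (V j))"
  have np: "real n > 0" using n by simp
  have k: "1 - exp (- a) \<le> 1 - exp (- (real n * a))"
    using n a by (simp add: mult_le_cancel_right1)
  have each: "(1 - exp (- a)) * measure_pmf.prob (V i) (A i) \<le> (\<Sum>j\<in>{..<M} - {i}. l1_pmf (V i) (V j)) / real M"
    if i: "i < M" for i
  proof -
    have c1: "measure_pmf.prob Psi (A i) \<le> exp (- (real n * a)) * measure_pmf.prob (V i) (A i)"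
    proof (rule prob_cmp)
      fix z assume z: "z \<in> A i"
      then have l: "ln (pmf (V i) z / pmf Psi z) > real n * a" using np
        by (simp add: A_def pos_less_divide_eq mult.commute)
      then have q: "pmf (V i) z / pmf Psi z > 0"
      proof -
        have ge: "pmf (V i) z / pmf Psi z \<ge> 0" by simp
        have "real n * a > 0" using np a by simp
        then have "pmf (V i) z / pmf Psi z \<noteq> 0" using l by auto
        then show ?thesis using ge by linarith
      qed
      then have yp: "pmf Psi z > 0" using pmf_nonneg[of Psi z]
        by (metis divide_eq_0_iff linorder_neqE_linordered_idom not_le)
      have "exp (real n * a) < pmf (V i) z / pmf Psi z" using l q
        by (metis exp_less_cancel_iff exp_ln)
      then have "exp (real n * a) * pmf Psi z \<le> pmf (V i) z" using yp by (simp add: less_divide_eq)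
      then have "exp (- (real n * a)) * (exp (real n * a) * pmf Psi z) \<le> exp (- (real n * a)) * pmf (V i) z"
        by (intro mult_left_mono) auto
      then show "pmf Psi z \<le> exp (- (real n * a)) * pmf (V i) z"
        by (simp add: exp_minus field_simps)
    qed
    have mix: "measure_pmf.prob Psi (A i) = (\<Sum>j<M. measure_pmf.prob (V j) (A i)) / real M"
      unfolding Psi_def code_out_def V_def by (rule prob_bind_uniform[OF M1])
    have "measure_pmf.prob (V i) (A i) - measure_pmf.prob Psi (A i)
        = (\<Sum>j<M. measure_pmf.prob (V i) (A i) - measure_pmf.prob (V j) (A i)) / real M"
      using M1 by (simp add: mix sum_subtractf field_simps)
    also have "(\<Sum>j<M. measure_pmf.prob (V i) (A i) - measure_pmf.prob (V j) (A i))
        = (\<Sum>j\<in>{..<M} - {i}. measure_pmf.prob (V i) (A i) - measure_pmf.prob (V j) (A i))"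
      using i by (intro sum.mono_neutral_right) auto
    also have "\<dots> \<le> (\<Sum>j\<in>{..<M} - {i}. l1_pmf (V i) (V j))"
      by (intro sum_mono prob_l1)
    finally have d: "measure_pmf.prob (V i) (A i) - measure_pmf.prob Psi (A i)
        \<le> (\<Sum>j\<in>{..<M} - {i}. l1_pmf (V i) (V j)) / real M"
      using M1 by (simp add: divide_right_mono)
    have "(1 - exp (- a)) * measure_pmf.prob (V i) (A i) \<le> (1 - exp (- (real n * a))) * measure_pmf.prob (V i) (A i)"
      using k by (intro mult_right_mono) auto
    also have "\<dots> \<le> measure_pmf.prob (V i) (A i) - measure_pmf.prob Psi (A i)"
      using c1 by (simp add: algebra_simps)
    finally show ?thesis using d by linarith
  qed
  have Snn: "S \<ge> 0" unfolding S_def by (intro sum_nonneg l1_nonneg)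
  have "(1 - exp (- a)) * ((\<Sum>i<M. measure_pmf.prob (V i) (A i)) / real M)
      = (\<Sum>i<M. (1 - exp (- a)) * measure_pmf.prob (V i) (A i)) / real M"
    by (simp add: sum_distrib_left)
  also have "\<dots> \<le> (\<Sum>i<M. (\<Sum>j\<in>{..<M} - {i}. l1_pmf (V i) (V j)) / real M) / real M"
    by (intro divide_right_mono sum_mono each) auto
  also have "\<dots> = S / (real M * real M)"
    by (simp add: S_def sum_divide_distrib[symmetric])
  also have "\<dots> \<le> d_E W M Qs"
  proof (cases "M = 1")
    case True
    then have "S = 0" by (simp add: S_def lessThan_Suc)
    then show ?thesis using True by (simp add: d_E_def)
  next
    case False
    then have M2: "real M \<ge> 2" using M1 by simp
    have "S / (real M * real M) \<le> S / (real M * (real M - 1))"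
      using M2 Snn by (intro divide_left_mono) auto
    then show ?thesis by (simp add: d_E_def S_def V_def)
  qed
  finally show ?thesis by (simp add: V_def A_def Psi_def)
qed

lemma eve_I_n:
  assumes M1: "M \<ge> 1" and n: "n \<ge> 1" and a: "a > 0"
  shows "(\<Sum>i<M. measure_pmf.prob (out_dist W (Qs i))
       {y. ln (pmf (out_dist W (Qs i)) y / pmf (code_out W M Qs) y) / real n > a}) / real M
     \<le> (I_E W M Qs + 1) / (real n * a)"
proof -
  have "(\<Sum>i<M. measure_pmf.prob (out_dist W (Qs i))
       {y. ln (pmf (out_dist W (Qs i)) y / pmf (code_out W M Qs) y) / real n > a}) / real M
     \<le> (\<Sum>i<M. (KL_pmf (out_dist W (Qs i)) (code_out W M Qs) + 1) / (real n * a)) / real M"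
    by (intro divide_right_mono sum_mono KL_bound[where c = "real M"] mix_pmf M1) (use M1 n a in auto)
  also have "\<dots> = (I_E W M Qs + 1) / (real n * a)"
    using M1 by (simp add: I_E_def sum_divide_distrib[symmetric] sum.distrib sum_distrib_left[symmetric] field_simps)
  finally show ?thesis .
qed

lemma code_le_bound:
  fixes Xs :: "nat \<Rightarrow> 'x set" and WB :: "nat \<Rightarrow> 'x \<Rightarrow> 'y pmf" and WE :: "nat \<Rightarrow> 'x \<Rightarrow> 'z pmf"
    and Qs :: "nat \<Rightarrow> nat \<Rightarrow> 'x pmf"
  assumes code: "\<forall>n. wiretap_code (Xs n) (M n) (Qs n) (Ds n)"
    and eps: "(\<lambda>n. eps_B (WB n) (M n) (Qs n) (Ds n)) \<longlonglongrightarrow> 0"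
    and eve: "\<And>a. a > 0 \<Longrightarrow> (\<lambda>n. spec_prob (\<lambda>n. pmf_of_set {..<M n}) (chan_comp WE Qs) n a) \<longlonglongrightarrow> 0"
  shows "liminf (\<lambda>n. ereal (ln (real (M n)) / real n)) \<le> wt_bound Xs WB WE"
proof -
  define p :: "nat \<Rightarrow> nat pmf" where "p = (\<lambda>n. pmf_of_set {..<M n})"
  define L where "L = liminf (\<lambda>n. ereal (ln (real (M n)) / real n))"
  have M1: "M n \<ge> 1" for n using code by (auto simp: wiretap_code_def)
  have ne: "{..<M n} \<noteq> {}" for n using M1[of n] by (auto simp: lessThan_empty_iff)
  have setp: "set_pmf (p n) = {..<M n}" for n using ne[of n] by (simp add: p_def)
  have Isup: "I_sup 0 p (chan_comp WE Qs) \<le> 0"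
  proof (rule ereal_le_epsilon2)
    fix e :: real assume e: "e > 0"
    have "limsup (\<lambda>n. ereal (spec_prob p (chan_comp WE Qs) n e)) = ereal 0"
      using eve[OF e] unfolding p_def
      by (intro lim_imp_Limsup) (auto intro: tendsto_ereal)
    then have "ereal e \<in> ereal ` {a. if (0::real) = 1
       then limsup (\<lambda>n. ereal (spec_prob p (chan_comp WE Qs) n a)) < 1
       else limsup (\<lambda>n. ereal (spec_prob p (chan_comp WE Qs) n a)) \<le> ereal 0}" by auto
    then have "I_sup 0 p (chan_comp WE Qs) \<le> ereal e"
      unfolding I_sup_def by (rule Inf_lower)
    then show "I_sup 0 p (chan_comp WE Qs) \<le> 0 + ereal e" by simp
  qed
  have Iinf: "L \<le> I_inf 1 p (chan_comp WB Qs)"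
    unfolding I_inf_def
  proof (rule Inf_greatest)
    fix x assume "x \<in> ereal ` {a. if (1::real) = 1
       then liminf (\<lambda>n. ereal (spec_prob p (chan_comp WB Qs) n a)) < 1
       else liminf (\<lambda>n. ereal (spec_prob p (chan_comp WB Qs) n a)) \<le> ereal 1}"
    then obtain a where x: "x = ereal a" and lim: "liminf (\<lambda>n. ereal (spec_prob p (chan_comp WB Qs) n a)) < 1"
      by auto
    show "L \<le> x"
    proof (rule ccontr)
      assume "\<not> L \<le> x"
      then have "ereal a < L" using x by simp
      then obtain b where ab: "ereal a < ereal b" and bL: "ereal b < L" using ereal_dense2 by blast
      have evb: "eventually (\<lambda>n. ereal b < ereal (ln (real (M n)) / real n)) sequentially"
        using less_LiminfD[OF bL[unfolded L_def]] .
      define c where "c = a - b"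
      have c: "c < 0" using ab by (simp add: c_def)
      have g0: "(\<lambda>n. exp (real n * c)) \<longlonglongrightarrow> 0"
      proof -
        have "(\<lambda>n. exp c ^ n) \<longlonglongrightarrow> 0" using c by (intro LIMSEQ_power_zero) auto
        then show ?thesis by (simp add: exp_of_nat_mult)
      qed
      have h0: "(\<lambda>n. exp (real n * a) / real (M n)) \<longlonglongrightarrow> 0"
      proof (rule tendsto_sandwich[OF _ _ tendsto_const g0])
        show "eventually (\<lambda>n. 0 \<le> exp (real n * a) / real (M n)) sequentially" by simp
        show "eventually (\<lambda>n. exp (real n * a) / real (M n) \<le> exp (real n * c)) sequentially"
          using evb eventually_ge_at_top[of 1]
        proof eventually_elim
          case (elim n)
          then have np: "real n > 0" by simp
          have "b < ln (real (M n)) / real n" using elim by simp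
          then have "real n * b < ln (real (M n))" using np by (simp add: pos_less_divide_eq mult.commute)
          then have "exp (real n * b) < real (M n)"
            using M1[of n] by (metis exp_less_cancel_iff exp_ln of_nat_0_less_iff less_le_trans zero_less_one)
          then have "exp (real n * a) / real (M n) \<le> exp (real n * a) / exp (real n * b)"
            using M1[of n] by (intro divide_left_mono) auto
          also have "\<dots> = exp (real n * c)" by (simp add: c_def exp_diff[symmetric] algebra_simps)
          finally show ?case .
        qed
      qed
      have sp1: "(\<lambda>n. spec_prob p (chan_comp WB Qs) n a) \<longlonglongrightarrow> 1"
      proof (rule tendsto_sandwich[OF _ _ _ tendsto_const])
        have "(\<lambda>n. 1 - (eps_B (WB n) (M n) (Qs n) (Ds n) + exp (real n * a) / real (M n))) \<longlonglongrightarrow> 1 - (0 + 0)"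
          by (intro tendsto_intros eps h0)
        then show "(\<lambda>n. 1 - (eps_B (WB n) (M n) (Qs n) (Ds n) + exp (real n * a) / real (M n))) \<longlonglongrightarrow> 1"
          by simp
        show "eventually (\<lambda>n. 1 - (eps_B (WB n) (M n) (Qs n) (Ds n) + exp (real n * a) / real (M n))
            \<le> spec_prob p (chan_comp WB Qs) n a) sequentially"
          using eventually_ge_at_top[of 1]
        proof eventually_elim
          case (elim n)
          show ?case
            using bob_n[OF code[rule_format, of n] elim, of "WB n" a] spec_code[where M=M and n=n and W=WB and Qs=Qs and a=a, OF M1[of n]]
            unfolding p_def by linarith
        qed
        show "eventually (\<lambda>n. spec_prob p (chan_comp WB Qs) n a \<le> 1) sequentially"
        proof (rule always_eventually, rule allI)
          fix n
          have "(\<Sum>i<M n. measure_pmf.prob (out_dist (WB n) (Qs n i))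
             {z. ln (pmf (out_dist (WB n) (Qs n i)) z / pmf (code_out (WB n) (M n) (Qs n)) z) / real n > a})
             \<le> (\<Sum>i<M n. 1)"
            by (intro sum_mono) auto
          then show "spec_prob p (chan_comp WB Qs) n a \<le> 1"
            using M1[of n] unfolding p_def spec_code[where M=M and n=n and W=WB and Qs=Qs and a=a, OF M1[of n]] by (simp add: divide_le_eq)
        qed
      qed
      have "liminf (\<lambda>n. ereal (spec_prob p (chan_comp WB Qs) n a)) = ereal 1"
        using sp1 by (intro lim_imp_Liminf) (auto intro: tendsto_ereal)
      then show False using lim by simp
    qed
  qed
  have mem: "I_inf 1 p (chan_comp WB Qs) - I_sup 0 p (chan_comp WE Qs) \<in>
     {I_inf 1 p (chan_comp WB Q) - I_sup 0 p (chan_comp WE Q) |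
      (p :: nat \<Rightarrow> nat pmf) (Q :: nat \<Rightarrow> nat \<Rightarrow> 'x pmf).
      (\<forall>n. \<forall>u\<in>set_pmf (p n). set_pmf (Q n u) \<subseteq> Xs n) \<and>
      \<not> (I_inf 1 p (chan_comp WB Q) = \<infinity> \<and> I_sup 0 p (chan_comp WE Q) = \<infinity>)}"
  proof -
    have "\<forall>n. \<forall>u\<in>set_pmf (p n). set_pmf (Qs n u) \<subseteq> Xs n"
      using code by (auto simp: setp wiretap_code_def)
    moreover have "I_sup 0 p (chan_comp WE Qs) \<noteq> \<infinity>" using Isup by auto
    ultimately show ?thesis by blast
  qed
  have "L \<le> I_inf 1 p (chan_comp WB Qs) - 0" using Iinf by simp
  also have "\<dots> \<le> I_inf 1 p (chan_comp WB Qs) - I_sup 0 p (chan_comp WE Qs)"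
    by (rule ereal_minus_mono) (auto simp: Isup)
  also have "\<dots> \<le> wt_bound Xs WB WE"
    unfolding wt_bound_def by (rule Sup_upper[OF mem])
  finally show ?thesis unfolding L_def .
qed

lemma spec_nonneg:
  fixes M :: "nat \<Rightarrow> nat"
  assumes "M n \<ge> 1"
  shows "spec_prob (\<lambda>n. pmf_of_set {..<M n}) (chan_comp W Qs) n a \<ge> 0"
  unfolding spec_code[where M=M and n=n and W=W and Qs=Qs and a=a, OF assms]
  by (intro divide_nonneg_nonneg sum_nonneg) auto

lemma eve_d_lim:
  assumes code: "\<forall>n. wiretap_code (Xs n) (M n) (Qs n) (Ds n)"
    and dE: "(\<lambda>n. d_E (WE n) (M n) (Qs n)) \<longlonglongrightarrow> 0" and a: "a > 0"
  shows "(\<lambda>n. spec_prob (\<lambda>n. pmf_of_set {..<M n}) (chan_comp WE Qs) n a) \<longlonglongrightarrow> 0"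
proof -
  have M1: "M n \<ge> 1" for n using code by (auto simp: wiretap_code_def)
  define k where "k = 1 - exp (- a)"
  have k: "k > 0" using a by (simp add: k_def)
  have up: "(\<lambda>n. d_E (WE n) (M n) (Qs n) / k) \<longlonglongrightarrow> 0"
    using tendsto_divide[OF dE tendsto_const[of k]] k by simp
  show ?thesis
  proof (rule tendsto_sandwich[OF _ _ tendsto_const up])
    show "eventually (\<lambda>n. 0 \<le> spec_prob (\<lambda>n. pmf_of_set {..<M n}) (chan_comp WE Qs) n a) sequentially"
      by (intro always_eventually allI spec_nonneg M1)
    show "eventually (\<lambda>n. spec_prob (\<lambda>n. pmf_of_set {..<M n}) (chan_comp WE Qs) n a
        \<le> d_E (WE n) (M n) (Qs n) / k) sequentially"
      using eventually_ge_at_top[of 1]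
    proof eventually_elim
      case (elim n)
      have "k * spec_prob (\<lambda>n. pmf_of_set {..<M n}) (chan_comp WE Qs) n a \<le> d_E (WE n) (M n) (Qs n)"
        unfolding spec_code[where M=M and n=n and W=WE and Qs=Qs and a=a, OF M1[of n]] k_def
        by (rule eve_d_n[OF M1 elim a])
      then show ?case using k by (simp add: le_divide_eq mult.commute)
    qed
  qed
qed

lemma eve_I_lim:
  assumes code: "\<forall>n. wiretap_code (Xs n) (M n) (Qs n) (Ds n)"
    and IE: "(\<lambda>n. I_E (WE n) (M n) (Qs n) / real n) \<longlonglongrightarrow> 0" and a: "a > 0"
  shows "(\<lambda>n. spec_prob (\<lambda>n. pmf_of_set {..<M n}) (chan_comp WE Qs) n a) \<longlonglongrightarrow> 0"
proof -
  have M1: "M n \<ge> 1" for n using code by (auto simp: wiretap_code_def)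
  have up: "(\<lambda>n. (I_E (WE n) (M n) (Qs n) / real n + inverse (real n)) / a) \<longlonglongrightarrow> 0"
    using tendsto_divide[OF tendsto_add[OF IE lim_inverse_n] tendsto_const[of a]] a by simp
  show ?thesis
  proof (rule tendsto_sandwich[OF _ _ tendsto_const up])
    show "eventually (\<lambda>n. 0 \<le> spec_prob (\<lambda>n. pmf_of_set {..<M n}) (chan_comp WE Qs) n a) sequentially"
      by (intro always_eventually allI spec_nonneg M1)
    show "eventually (\<lambda>n. spec_prob (\<lambda>n. pmf_of_set {..<M n}) (chan_comp WE Qs) n a
        \<le> (I_E (WE n) (M n) (Qs n) / real n + inverse (real n)) / a) sequentially"
      using eventually_ge_at_top[of 1]
    proof eventually_elim
      case (elim n)
      have "spec_prob (\<lambda>n. pmf_of_set {..<M n}) (chan_comp WE Qs) n a \<le> (I_E (WE n) (M n) (Qs n) + 1) / (real n * a)"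
        unfolding spec_code[where M=M and n=n and W=WE and Qs=Qs and a=a, OF M1[of n]]
        by (rule eve_I_n[OF M1 elim a])
      also have "\<dots> = (I_E (WE n) (M n) (Qs n) / real n + inverse (real n)) / a"
        using elim a by (simp add: field_simps)
      finally show ?case .
    qed
  qed
qed

theorem lemma6:
  fixes Xs :: "nat \<Rightarrow> 'x set"
    and WB :: "nat \<Rightarrow> 'x \<Rightarrow> 'y pmf"
    and WE :: "nat \<Rightarrow> 'x \<Rightarrow> 'z pmf"
  shows "C_d Xs WB WE \<le> wt_bound Xs WB WE \<and> C_I Xs WB WE \<le> wt_bound Xs WB WE"
proof
  show "C_d Xs WB WE \<le> wt_bound Xs WB WE"
    unfolding C_d_def
  proof (rule Sup_least)
    fix x assume "x \<in> {liminf (\<lambda>n. ereal (ln (real (M n)) / real n)) | M Qs Ds.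
      (\<forall>n. wiretap_code (Xs n) (M n) (Qs n) (Ds n)) \<and>
      (\<lambda>n. eps_B (WB n) (M n) (Qs n) (Ds n)) \<longlonglongrightarrow> 0 \<and>
      (\<lambda>n. d_E (WE n) (M n) (Qs n)) \<longlonglongrightarrow> 0}"
    then obtain M Qs Ds where x: "x = liminf (\<lambda>n. ereal (ln (real (M n)) / real n))"
      and code: "\<forall>n. wiretap_code (Xs n) (M n) (Qs n) (Ds n)"
      and eps: "(\<lambda>n. eps_B (WB n) (M n) (Qs n) (Ds n)) \<longlonglongrightarrow> 0"
      and dE: "(\<lambda>n. d_E (WE n) (M n) (Qs n)) \<longlonglongrightarrow> 0" by blast
    show "x \<le> wt_bound Xs WB WE"
      unfolding x by (rule code_le_bound[OF code eps eve_d_lim[OF code dE]])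
  qed
  show "C_I Xs WB WE \<le> wt_bound Xs WB WE"
    unfolding C_I_def
  proof (rule Sup_least)
    fix x assume "x \<in> {liminf (\<lambda>n. ereal (ln (real (M n)) / real n)) | M Qs Ds.
      (\<forall>n. wiretap_code (Xs n) (M n) (Qs n) (Ds n)) \<and>
      (\<lambda>n. eps_B (WB n) (M n) (Qs n) (Ds n)) \<longlonglongrightarrow> 0 \<and>
      (\<lambda>n. I_E (WE n) (M n) (Qs n) / real n) \<longlonglongrightarrow> 0}"
    then obtain M Qs Ds where x: "x = liminf (\<lambda>n. ereal (ln (real (M n)) / real n))"
      and code: "\<forall>n. wiretap_code (Xs n) (M n) (Qs n) (Ds n)"
      and eps: "(\<lambda>n. eps_B (WB n) (M n) (Qs n) (Ds n)) \<longlonglongrightarrow> 0"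
      and IE: "(\<lambda>n. I_E (WE n) (M n) (Qs n) / real n) \<longlonglongrightarrow> 0" by blast
    show "x \<le> wt_bound Xs WB WE"
      unfolding x by (rule code_le_bound[OF code eps eve_I_lim[OF code IE]])
  qed
qed

end
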